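(* Let $d\ge1$ and $L\ge2$ be integers, $\Phi\in\mathbb{R}^{d\times d}$, and $W_1,\dots,W_L\in\mathbb{R}^{d\times d}$. Let $\mathcal{R}=\tfrac12\|W_{L:1}-\Phi\|_F^2$ and $D_l=W_{l+1}^\intercal W_{l+1}-W_lW_l^\intercal$ for $l=1,\dots,L-1$. Suppose there are $\alpha\ge 0$ and $\phi>0$ with $\|W_l\|_2\le\alpha$ for $l=1,\dots,L-1$ and $1\le\alpha^{2(L-1)}<L\phi^2$, and suppose $\|D_l\|_2\le\delta$ for $l=1,\dots,L-2$ and $\|I+D_{L-1}\|_2\le\varepsilon$, where $\delta\le(2L^3\phi^2)^{-1}$ and $\varepsilon\le(4L^2)^{-1}$. Then $$\|\nabla_L\mathcal{R}\|_F^2\ge\mathcal{R}.$$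
   Context: For $l_2\ge l_1$ write $W_{l_2:l_1}=W_{l_2}\cdots W_{l_1}$, empty products being the identity $I$. $\nabla_L\mathcal{R}=(W_{L:1}-\Phi)W_{L-1:1}^\intercal$ is the gradient of $\mathcal{R}(W_1,\dots,W_L)=\tfrac12\|W_L\cdots W_1-\Phi\|_F^2$ with respect to $W_L$. $\|\cdot\|_2$ is the spectral norm and $\|\cdot\|_F$ the Frobenius norm. *)

theory Defs
  imports "HOL-Analysis.Analysis"
begin

text \<open>Square d x d real matrices are modelled as real^'n^'n, d = CARD('n) \<ge> 1.\<close>

text \<open>Ordered product W_{hi:lo} = W hi ** ... ** W lo; identity if hi < lo.\<close>
definition mprod :: "(nat \<Rightarrow> real^'n^'n) \<Rightarrow> nat \<Rightarrow> nat \<Rightarrow> real^'n^'n" where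
  "mprod W hi lo = foldl (\<lambda>M k. W k ** M) (mat 1) [lo..<Suc hi]"

definition spec_norm :: "real^'n^'m \<Rightarrow> real" where
  "spec_norm A = onorm (\<lambda>x. A *v x)"

definition fro_norm :: "real^'n^'m \<Rightarrow> real" where
  "fro_norm A = sqrt (\<Sum>i\<in>UNIV. \<Sum>j\<in>UNIV. (A $ i $ j)^2)"

definition risk :: "nat \<Rightarrow> (nat \<Rightarrow> real^'n^'n) \<Rightarrow> real^'n^'n \<Rightarrow> real" where
  "risk L W Phi = (1/2) * (fro_norm (mprod W L 1 - Phi))^2"

definition grad_L :: "nat \<Rightarrow> (nat \<Rightarrow> real^'n^'n) \<Rightarrow> real^'n^'n \<Rightarrow> real^'n^'n" where
  "grad_L L W Phi = (mprod W L 1 - Phi) ** transpose (mprod W (L - 1) 1)"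

definition Dmat :: "(nat \<Rightarrow> real^'n^'n) \<Rightarrow> nat \<Rightarrow> real^'n^'n" where
  "Dmat W l = transpose (W (l+1)) ** W (l+1) - W l ** transpose (W l)"

end

theory Submission
  imports Defs
begin

abbreviation sn :: "real^'n^'n \<Rightarrow> real" where "sn A \<equiv> onorm (\<lambda>x. A *v x)"

lemma sn_eq: "spec_norm A = sn A" by (simp add: spec_norm_def)

lemma sn_bound: "norm (A *v x) \<le> sn A * norm x"
  by (rule onorm) simp

lemma sn_nonneg: "0 \<le> sn A"
  by (rule onorm_pos_le) simp

lemma sn_le: assumes "\<And>x. norm ((A::real^'n^'n) *v x) \<le> c * norm x" shows "sn A \<le> c"
  by (rule onorm_le) (rule assms)

lemma sn_mul: "sn (A ** B) \<le> sn A * sn B"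
proof -
  have "sn (A ** B) = onorm ((\<lambda>x. A *v x) \<circ> (\<lambda>x. B *v x))"
    by (simp add: o_def matrix_vector_mul_assoc)
  also have "\<dots> \<le> sn A * sn B" by (rule onorm_compose) simp_all
  finally show ?thesis .
qed

lemma sn_add: "sn (A + B) \<le> sn A + sn B"
proof -
  have "sn (A + B) = onorm (\<lambda>x. A *v x + B *v x)"
    by (simp add: matrix_vector_mult_add_rdistrib)
  also have "\<dots> \<le> sn A + sn B" by (rule onorm_triangle) simp_all
  finally show ?thesis .
qed

lemma sn_minus: "sn (- A) = sn A"
proof -
  have "sn (- A) = onorm (\<lambda>x. - (A *v x))"
    by (metis diff_0 matrix_vector_mult_0 matrix_vector_mult_diff_rdistrib)
  thus ?thesis by (simp add: onorm_neg)
qed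

lemma sn_diff_comm: "sn (A - B) = sn (B - A)"
  by (metis minus_diff_eq sn_minus)

lemma sn_zero: "sn (0::real^'n^'n) = 0"
  unfolding matrix_vector_mult_0 by (rule onorm_zero)

lemma sn_id: "sn (mat 1 :: real^'n^'n) \<le> 1"
  by (rule sn_le) simp

lemma inner_transp: "inner x (A *v y) = inner (transpose A *v x) (y::real^'n)"
  by (simp add: dot_lmul_matrix)

lemma sn_transpose_le: "sn (transpose (A::real^'n^'n)) \<le> sn A"
proof (rule sn_le)
  fix x :: "real^'n"
  let ?y = "transpose A *v x"
  have "norm ?y ^ 2 = inner x (A *v ?y)"
    by (simp add: inner_transp power2_norm_eq_inner)
  also have "\<dots> \<le> norm x * norm (A *v ?y)" by (rule Cauchy_Schwarz_ineq2[THEN order_trans[OF abs_ge_self]])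
  also have "\<dots> \<le> norm x * (sn A * norm ?y)" by (rule mult_left_mono[OF sn_bound]) simp
  finally have "norm ?y * norm ?y \<le> (sn A * norm x) * norm ?y"
    by (simp add: power2_eq_square algebra_simps)
  thus "norm ?y \<le> sn A * norm x"
    by (cases "norm ?y = 0") (auto simp: sn_nonneg)
qed

lemma sn_transpose: "sn (transpose (A::real^'n^'n)) = sn A"
  by (metis antisym sn_transpose_le transpose_transpose)

lemma mprod_0: "mprod W 0 (Suc 0) = mat 1"
  by (simp add: mprod_def)

lemma mprod_Suc: "mprod W (Suc k) (Suc 0) = W (Suc k) ** mprod W k (Suc 0)"
  by (simp add: mprod_def)

lemma sn_tr_sq: "sn ((A::real^'n^'n) ** transpose A) \<le> sn A ^ 2"
  using sn_mul[of A "transpose A"] sn_transpose[of A] by (metis power2_eq_square)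

lemma sn_trl_sq: "sn (transpose (A::real^'n^'n) ** A) \<le> sn A ^ 2"
  using sn_mul[of "transpose A" A] sn_transpose[of A] by (metis power2_eq_square)

lemma mm_sub_l: "(A::real^'n^'n) ** (B - C) = A ** B - A ** C"
  by (simp add: matrix_matrix_mult_def vec_eq_iff sum_subtractf right_diff_distrib)
lemma mm_sub_r: "((A::real^'n^'n) - B) ** C = A ** C - B ** C"
  by (simp add: matrix_matrix_mult_def vec_eq_iff sum_subtractf left_diff_distrib)
lemma mm_add_r: "((A::real^'n^'n) + B) ** C = A ** C + B ** C"
  by (simp add: matrix_matrix_mult_def vec_eq_iff sum.distrib distrib_right)

lemma split3: "(x::'a::ab_group_add) - z = (x - y) + (y - z)"
  by (simp only: add_diff_eq diff_add_cancel)

primrec mpow :: "real^'n^'n \<Rightarrow> nat \<Rightarrow> real^'n^'n" where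
  "mpow M 0 = mat 1"
| "mpow M (Suc k) = M ** mpow M k"

lemma mpow_Suc': "mpow M (Suc k) = mpow M k ** M"
  by (induction k) (simp_all add: matrix_mul_assoc)

lemma sn_mpow: assumes "sn M \<le> b" shows "sn (mpow M k) \<le> b ^ k"
proof (induction k)
  case 0 then show ?case using sn_id by simp
next
  case (Suc k)
  have "sn (mpow M (Suc k)) \<le> sn M * sn (mpow M k)" using sn_mul by simp
  also have "\<dots> \<le> b * b ^ k"
    by (intro mult_mono assms Suc sn_nonneg) (use assms sn_nonneg in \<open>meson order_trans\<close>)
  finally show ?case by simp
qed

lemma sn_mpow_diff:
  assumes "sn X \<le> b" "sn Y \<le> b"
  shows "sn (mpow X m - mpow Y m) \<le> real m * b ^ (m - 1) * sn (X - Y)"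
proof (induction m)
  case 0 then show ?case by (simp add: onorm_zero)
next
  case (Suc m)
  have b0: "0 \<le> b" using assms(1) sn_nonneg order_trans by blast
  have "mpow X (Suc m) - mpow Y (Suc m) = X ** (mpow X m - mpow Y m) + (X - Y) ** mpow Y m"
    unfolding mm_sub_l mm_sub_r mpow.simps by (rule split3)
  hence "sn (mpow X (Suc m) - mpow Y (Suc m)) \<le> sn (X ** (mpow X m - mpow Y m)) + sn ((X - Y) ** mpow Y m)"
    using sn_add by metis
  also have "\<dots> \<le> sn X * sn (mpow X m - mpow Y m) + sn (X - Y) * sn (mpow Y m)"
    by (rule add_mono) (rule sn_mul)+
  also have "\<dots> \<le> b * (real m * b ^ (m - 1) * sn (X - Y)) + sn (X - Y) * b ^ m"
  proof (rule add_mono)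
    show "sn X * sn (mpow X m - mpow Y m) \<le> b * (real m * b ^ (m - 1) * sn (X - Y))"
      by (rule mult_mono[OF assms(1) Suc b0 sn_nonneg])
    show "sn (X - Y) * sn (mpow Y m) \<le> sn (X - Y) * b ^ m"
      by (rule mult_left_mono[OF sn_mpow[OF assms(2)] sn_nonneg])
  qed
  also have "\<dots> = real (Suc m) * b ^ (Suc m - 1) * sn (X - Y)"
    by (cases m) (simp_all add: algebra_simps)
  finally show ?case .
qed

lemma mpow_tr: "mpow (V ** transpose V) (Suc k) = V ** mpow (transpose V ** V) k ** transpose V"
proof (induction k)
  case 0 then show ?case by simp
next
  case (Suc k)
  have "mpow (V ** transpose V) (Suc (Suc k)) = (V ** transpose V) ** (V ** mpow (transpose V ** V) k ** transpose V)"
    using Suc by simp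
  also have "\<dots> = V ** ((transpose V ** V) ** mpow (transpose V ** V) k) ** transpose V"
    by (simp add: matrix_mul_assoc)
  finally show ?case by simp
qed

lemma sn_mul3: "sn (A ** B ** C) \<le> sn A * sn B * sn C"
  by (metis (no_types, lifting) mult_right_mono order_trans sn_mul sn_nonneg)

lemma approx:
  fixes W :: "nat \<Rightarrow> real^'n^'n"
  assumes hW: "\<forall>l\<in>{1..K}. sn (W l) \<le> \<alpha>" and hD: "\<forall>l\<in>{1..K-1}. sn (Dmat W l) \<le> \<delta>"
    and d0: "0 \<le> \<delta>" and a0: "0 \<le> \<alpha>"
  shows "1 \<le> k \<Longrightarrow> k \<le> K \<Longrightarrow> sn (mprod W k 1 ** transpose (mprod W k 1) - mpow (W k ** transpose (W k)) k)
           \<le> \<delta> * \<alpha>^(2*(k-1)) * (real k * (real k - 1) / 2)"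
proof (induction k)
  case 0 then show ?case by simp
next
  case (Suc k)
  show ?case
  proof (cases "k = 0")
    case True
    then show ?thesis by (simp add: mprod_Suc mprod_0 onorm_zero)
  next
    case False
    hence k1: "1 \<le> k" by simp
    have IH: "sn (mprod W k 1 ** transpose (mprod W k 1) - mpow (W k ** transpose (W k)) k)
           \<le> \<delta> * \<alpha>^(2*(k-1)) * (real k * (real k - 1) / 2)" using Suc k1 by simp
    define V where "V = W (Suc k)"
    define Q where "Q = mprod W k 1 ** transpose (mprod W k 1)"
    define A where "A = W k ** transpose (W k)"
    define B where "B = transpose V ** V"
    define e where "e = \<delta> * \<alpha>^(2*(k-1)) * (real k * (real k - 1) / 2)"
    have snV: "sn V \<le> \<alpha>" using hW Suc.prems unfolding V_def by auto
    have snWk: "sn (W k) \<le> \<alpha>" using hW Suc.prems k1 by auto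
    have a2: "\<alpha>^2 = \<alpha> * \<alpha>" by (simp add: power2_eq_square)
    have snA: "sn A \<le> \<alpha>^2" unfolding A_def
      using sn_tr_sq[of "W k"] power_mono[OF snWk sn_nonneg, of 2] by linarith
    have snB: "sn B \<le> \<alpha>^2" unfolding B_def
      using sn_trl_sq[of V] power_mono[OF snV sn_nonneg, of 2] by linarith
    have snD: "sn (A - B) \<le> \<delta>"
    proof -
      have "Dmat W k = B - A" by (simp add: Dmat_def A_def B_def V_def)
      moreover have "k \<in> {1..K-1}" using Suc.prems k1 by auto
      ultimately have "sn (B - A) \<le> \<delta>" using hD by metis
      thus ?thesis using sn_diff_comm[of A B] by simp
    qed
    have IH': "sn (Q - mpow A k) \<le> e" using IH unfolding Q_def A_def e_def .
    have pd: "sn (mpow A k - mpow B k) \<le> real k * (\<alpha>^2) ^ (k - 1) * \<delta>"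
      using sn_mpow_diff[OF snA snB, of k] snD
      by (meson order_trans mult_left_mono mult_nonneg_nonneg of_nat_0_le_iff zero_le_power a0 zero_le_power2)
    have eq1: "mprod W (Suc k) 1 ** transpose (mprod W (Suc k) 1) = V ** Q ** transpose V"
      by (simp add: mprod_Suc V_def Q_def matrix_transpose_mul matrix_mul_assoc)
    have eq2: "mpow (W (Suc k) ** transpose (W (Suc k))) (Suc k) = V ** mpow B k ** transpose V"
      unfolding V_def B_def by (rule mpow_tr)
    have "mprod W (Suc k) 1 ** transpose (mprod W (Suc k) 1) - mpow (W (Suc k) ** transpose (W (Suc k))) (Suc k)
        = V ** ((Q - mpow A k) + (mpow A k - mpow B k)) ** transpose V"
      unfolding eq1 eq2 by (simp add: mm_sub_l mm_sub_r)
    hence "sn (mprod W (Suc k) 1 ** transpose (mprod W (Suc k) 1) - mpow (W (Suc k) ** transpose (W (Suc k))) (Suc k))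
        \<le> sn V * sn ((Q - mpow A k) + (mpow A k - mpow B k)) * sn (transpose V)"
      using sn_mul3 by metis
    also have "\<dots> \<le> \<alpha> * (e + real k * (\<alpha>^2) ^ (k - 1) * \<delta>) * \<alpha>"
    proof -
      have "sn ((Q - mpow A k) + (mpow A k - mpow B k)) \<le> e + real k * (\<alpha>^2) ^ (k - 1) * \<delta>"
        using sn_add IH' pd by (meson add_mono order_trans)
      moreover have "sn (transpose V) \<le> \<alpha>" using snV sn_transpose by metis
      ultimately show ?thesis
      proof -
        assume X: "sn ((Q - mpow A k) + (mpow A k - mpow B k)) \<le> e + real k * (\<alpha>^2) ^ (k - 1) * \<delta>"
          and T: "sn (transpose V) \<le> \<alpha>"
        have E0: "0 \<le> e + real k * (\<alpha>^2) ^ (k - 1) * \<delta>" using X sn_nonneg order_trans by blast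
        have "sn V * sn ((Q - mpow A k) + (mpow A k - mpow B k)) \<le> \<alpha> * (e + real k * (\<alpha>^2) ^ (k - 1) * \<delta>)"
          by (rule mult_mono[OF snV X a0 sn_nonneg])
        thus ?thesis
          by (rule mult_mono[OF _ T mult_nonneg_nonneg[OF a0 E0] sn_nonneg])
      qed
    qed
    also have "\<dots> = \<delta> * \<alpha>^(2*(Suc k-1)) * (real (Suc k) * (real (Suc k) - 1) / 2)"
    proof -
      obtain j where j: "k = Suc j" using k1 by (cases k) auto
      show ?thesis unfolding e_def j
        by (simp add: power_mult power2_eq_square algebra_simps field_simps)
    qed
    finally show ?thesis .
  qed
qed

lemma norm_sq_sum: "norm (v::real^'n) ^ 2 = (\<Sum>j\<in>UNIV. (v $ j)^2)"
  unfolding power2_norm_eq_inner inner_vec_def by (simp add: power2_eq_square)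

lemma fro_sq: "fro_norm (A::real^'n^'m) ^ 2 = (\<Sum>i\<in>UNIV. norm (A $ i) ^ 2)"
  unfolding fro_norm_def norm_sq_sum
  by (simp add: sum_nonneg)

lemma row_mul_tr: "((E::real^'n^'n) ** transpose P) $ i = P *v (E $ i)"
  apply (simp add: matrix_matrix_mult_def matrix_vector_mult_def transpose_def vec_eq_iff)
  apply (intro allI sum.cong refl)
  apply (simp add: mult.commute)
  done

lemma inner_self_tr: "inner x ((A ** transpose A) *v x) = norm (transpose A *v (x::real^'n)) ^ 2"
proof -
  have "inner x ((A ** transpose A) *v x) = inner x (A *v (transpose A *v x))"
    by (simp only: matrix_vector_mul_assoc)
  also have "\<dots> = inner (transpose A *v x) (transpose A *v x)"
    by (rule inner_transp)
  finally show ?thesis by (simp add: power2_norm_eq_inner)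
qed

lemma inner_le_sn: "inner x (A *v x) \<le> sn A * norm (x::real^'n) ^ 2"
proof -
  have "inner x (A *v x) \<le> norm x * norm (A *v x)"
    by (rule Cauchy_Schwarz_ineq2[THEN order_trans[OF abs_ge_self]])
  also have "\<dots> \<le> norm x * (sn A * norm x)" by (rule mult_left_mono[OF sn_bound]) simp
  finally show ?thesis by (simp add: power2_eq_square algebra_simps)
qed

lemma mpow_lower:
  fixes M :: "real^'n^'n"
  assumes sym: "transpose M = M" and lb: "\<And>x. m * norm x ^ 2 \<le> inner x (M *v x)" and m0: "0 \<le> m"
  shows "m ^ k * norm x ^ 2 \<le> inner x (mpow M k *v x)"
proof (induction k arbitrary: x rule: less_induct)
  case (less k)
  show ?case
  proof (cases k)
    case 0 then show ?thesis by (simp add: power2_norm_eq_inner)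
  next
    case (Suc j)
    show ?thesis
    proof (cases j)
      case 0 then show ?thesis using Suc lb by simp
    next
      case (Suc i)
      have kk: "k = Suc (Suc i)" using Suc \<open>k = Suc j\<close> by simp
      have Mx: "m^2 * norm x ^ 2 \<le> norm (M *v x) ^ 2"
      proof -
        have "m * norm x ^ 2 \<le> norm x * norm (M *v x)"
          using lb[of x] Cauchy_Schwarz_ineq2[of x "M *v x"] by linarith
        hence "m * norm x \<le> norm (M *v x)"
          by (cases "norm x = 0") (auto simp: power2_eq_square mult.assoc mult.left_commute[of m])
        hence "(m * norm x)^2 \<le> norm (M *v x) ^ 2"
          using m0 by (intro power_mono) auto
        thus ?thesis by (simp add: power_mult_distrib)
      qed
      have "mpow M k *v x = M *v (mpow M i *v (M *v x))"
      proof -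
        have "mpow M k = M ** (mpow M i ** M)" by (simp only: kk mpow.simps(2)[of M "Suc i"] mpow_Suc'[of M i])
        thus ?thesis by (simp only: matrix_vector_mul_assoc)
      qed
      hence "inner x (mpow M k *v x) = inner (M *v x) (mpow M i *v (M *v x))"
        using inner_transp[of x M] sym by simp
      also have "\<dots> \<ge> m ^ i * norm (M *v x) ^ 2" using less kk by simp
      moreover have "m ^ i * norm (M *v x) ^ 2 \<ge> m ^ i * (m^2 * norm x ^ 2)"
        using Mx m0 by (simp add: mult_left_mono)
      moreover have "m ^ k * norm x ^ 2 = m ^ i * (m^2 * norm x ^ 2)"
        by (simp add: kk power2_eq_square mult_ac)
      ultimately show ?thesis by linarith
    qed
  qed
qed

lemma lower_from_tr:
  fixes P :: "real^'n^'n"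
  assumes h: "\<And>x. norm x ^ 2 \<le> 2 * norm (transpose P *v x) ^ 2"
  shows "norm r ^ 2 \<le> 2 * norm (P *v r) ^ 2"
proof -
  have lin: "linear (\<lambda>x. transpose P *v x)" by (rule matrix_vector_mul_linear)
  have "inj (\<lambda>x. transpose P *v x)"
  proof (rule injI)
    fix x y assume "transpose P *v x = transpose P *v y"
    hence "transpose P *v (x - y) = 0" by (simp add: matrix_vector_mult_diff_distrib)
    hence "norm (x - y) ^ 2 \<le> 0" using h[of "x - y"] by simp
    thus "x = y" by simp
  qed
  hence "surj (\<lambda>x. transpose P *v x)" using lin linear_injective_imp_surjective by blast
  then obtain x where rx: "r = transpose P *v x" by (metis surjD)
  have "norm r ^ 2 = inner x (P *v r)"
    using inner_transp[of x P r] rx by (simp add: power2_norm_eq_inner)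
  also have "\<dots> \<le> norm x * norm (P *v r)"
    by (rule Cauchy_Schwarz_ineq2[THEN order_trans[OF abs_ge_self]])
  finally have a: "norm r ^ 2 \<le> norm x * norm (P *v r)" .
  hence "(norm r ^ 2) ^ 2 \<le> (norm x * norm (P *v r)) ^ 2"
    by (intro power_mono) auto
  also have "\<dots> = norm x ^ 2 * norm (P *v r) ^ 2" by (simp add: power_mult_distrib)
  also have "\<dots> \<le> (2 * norm r ^ 2) * norm (P *v r) ^ 2"
    using h[of x] rx by (intro mult_right_mono) auto
  finally have b: "norm r ^ 2 * norm r ^ 2 \<le> norm r ^ 2 * (2 * norm (P *v r) ^ 2)"
    by (simp add: power2_eq_square mult_ac)
  show ?thesis
  proof (cases "norm r = 0")
    case True thus ?thesis by simp
  next
    case False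
    hence "0 < norm r ^ 2" by simp
    thus ?thesis using mult_left_le_imp_le[OF b] by blast
  qed
qed

theorem lemma6:
  fixes W :: "nat \<Rightarrow> real^'n^'n" and Phi :: "real^'n^'n"
    and L :: nat and \<alpha> \<phi> \<delta> \<epsilon> :: real
  assumes "L \<ge> 2"
    and "\<alpha> \<ge> 0" and "\<phi> > 0"
    and "\<forall>l\<in>{1..L-1}. spec_norm (W l) \<le> \<alpha>"
    and "1 \<le> \<alpha> ^ (2*(L-1))" and "\<alpha> ^ (2*(L-1)) < real L * \<phi>^2"
    and "\<forall>l\<in>{1..L-2}. spec_norm (Dmat W l) \<le> \<delta>"
    and "spec_norm (mat 1 + Dmat W (L-1)) \<le> \<epsilon>"
    and "\<delta> \<le> 1 / (2 * real L ^ 3 * \<phi>^2)"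
    and "\<epsilon> \<le> 1 / (4 * real L ^ 2)"
  shows "(fro_norm (grad_L L W Phi))^2 \<ge> risk L W Phi"
proof -
  note L2 = assms(1) and a0 = assms(2) and ph = assms(3)
  define K where "K = L - 1"
  have K1: "1 \<le> K" and LK: "L = Suc K" using L2 by (auto simp: K_def)
  define \<delta>0 where "\<delta>0 = max \<delta> 0"
  have d00: "0 \<le> \<delta>0" by (simp add: \<delta>0_def)
  have hW: "\<forall>l\<in>{1..K}. sn (W l) \<le> \<alpha>" using assms(4) by (simp add: K_def sn_eq)
  have hD: "\<forall>l\<in>{1..K-1}. sn (Dmat W l) \<le> \<delta>0"
  proof -
    have "K - 1 = L - 2" by (simp add: K_def)
    thus ?thesis using assms(7) by (auto simp: sn_eq \<delta>0_def)
  qed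
  have a1: "1 \<le> \<alpha>"
  proof (rule ccontr)
    assume "\<not> 1 \<le> \<alpha>"
    hence "\<alpha> ^ (2*(L-1)) < 1 ^ (2*(L-1))"
      using L2 a0 by (intro power_strict_mono) auto
    thus False using assms(5) by simp
  qed
  define P where "P = mprod W K 1"
  define M where "M = W K ** transpose (W K)"
  define eb where "eb = \<delta>0 * \<alpha>^(2*(K-1)) * (real K * (real K - 1) / 2)"
  have appr: "sn (P ** transpose P - mpow M K) \<le> eb"
    unfolding P_def M_def eb_def by (rule approx[OF hW hD d00 a0 K1 order_refl])
  have Lpos: "0 < real L" using L2 by simp
  have eb4: "eb \<le> 1/4"
  proof -
    have p1: "\<alpha>^(2*(K-1)) \<le> real L * \<phi>^2"
    proof -
      have "\<alpha>^(2*(K-1)) \<le> \<alpha>^(2*(L-1))" using a1 by (intro power_increasing) (auto simp: K_def)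
      thus ?thesis using assms(6) by simp
    qed
    have p2: "real K * (real K - 1) / 2 \<le> real L ^ 2 / 2"
    proof -
      have "real K * (real K - 1) \<le> (1 + real K) * (1 + real K)" by (simp add: algebra_simps)
      thus ?thesis using LK by (simp add: power2_eq_square)
    qed
    have p3: "0 \<le> real K * (real K - 1) / 2" using K1 by simp
    have "\<alpha>^(2*(K-1)) * (real K * (real K - 1) / 2) \<le> (real L * \<phi>^2) * (real L ^ 2 / 2)"
      by (rule mult_mono[OF p1 p2]) (use ph Lpos p3 in auto)
    hence "eb \<le> \<delta>0 * ((real L * \<phi>^2) * (real L ^ 2 / 2))"
      unfolding eb_def using d00 by (simp add: mult.assoc mult_left_mono)
    also have "\<dots> \<le> 1 / (2 * real L ^ 3 * \<phi>^2) * ((real L * \<phi>^2) * (real L ^ 2 / 2))"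
    proof (rule mult_right_mono)
      show "\<delta>0 \<le> 1 / (2 * real L ^ 3 * \<phi>^2)"
        using assms(9) Lpos ph by (simp add: \<delta>0_def)
    qed (use Lpos in simp)
    also have "\<dots> = 1/4" using Lpos ph by (simp add: field_simps power2_eq_square power3_eq_cube)
    finally show ?thesis .
  qed
  have e0: "0 \<le> \<epsilon>" using assms(8) sn_nonneg[of "mat 1 + Dmat W (L-1)"] by (simp add: sn_eq)
  have eK: "real K * \<epsilon> \<le> 1/8"
  proof -
    have "real K * \<epsilon> \<le> real L * (1 / (4 * real L ^ 2))"
      using assms(10) e0 LK by (intro mult_mono) auto
    also have "\<dots> = 1 / (4 * real L)" using Lpos by (simp add: power2_eq_square)
    also have "\<dots> \<le> 1/8" using L2 by (simp add: field_simps)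
    finally show ?thesis .
  qed
  have e1: "\<epsilon> \<le> 1"
  proof -
    have "1 * \<epsilon> \<le> real K * \<epsilon>" using K1 e0 by (intro mult_right_mono) auto
    thus ?thesis using eK by simp
  qed
  have bern: "1 - real K * \<epsilon> \<le> (1 - \<epsilon>) ^ K"
    using Bernoulli_inequality[of "- \<epsilon>" K] e1 by simp
  have Msym: "transpose M = M" by (simp add: M_def matrix_transpose_mul)
  have Mlb: "(1 - \<epsilon>) * norm x ^ 2 \<le> inner x (M *v x)" for x
  proof -
    have DL: "Dmat W (L-1) = transpose (W L) ** W L - M"
    proof -
      have "L - 1 + 1 = L" using L2 by simp
      thus ?thesis by (simp add: Dmat_def M_def K_def)
    qed
    have "inner x ((mat 1 + Dmat W (L-1)) *v x) \<le> \<epsilon> * norm x ^ 2"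
    proof -
      have "sn (mat 1 + Dmat W (L-1)) \<le> \<epsilon>" using assms(8) unfolding sn_eq .
      hence "sn (mat 1 + Dmat W (L-1)) * norm x ^ 2 \<le> \<epsilon> * norm x ^ 2"
        by (rule mult_right_mono) simp
      thus ?thesis using inner_le_sn[of x "mat 1 + Dmat W (L-1)"] by linarith
    qed
    moreover have "inner x ((mat 1 + Dmat W (L-1)) *v x)
        = norm x ^ 2 + norm (W L *v x) ^ 2 - inner x (M *v x)"
    proof -
      have "inner x ((transpose (W L) ** W L) *v x) = norm (W L *v x) ^ 2"
        using inner_self_tr[of x "transpose (W L)"] by simp
      thus ?thesis unfolding DL
        by (simp add: matrix_vector_mult_add_rdistrib matrix_vector_mult_diff_rdistrib
            inner_add_right inner_diff_right power2_norm_eq_inner del: transpose_matrix_vector)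
    qed
    ultimately have "norm x ^ 2 + norm (W L *v x) ^ 2 - inner x (M *v x) \<le> \<epsilon> * norm x ^ 2"
      by linarith
    thus ?thesis using zero_le_power2[of "norm (W L *v x)"] unfolding left_diff_distrib by linarith
  qed
  have key: "norm x ^ 2 \<le> 2 * norm (transpose P *v x) ^ 2" for x
  proof -
    have "(1 - \<epsilon>) ^ K * norm x ^ 2 \<le> inner x (mpow M K *v x)"
      by (rule mpow_lower[OF Msym Mlb]) (use e1 in simp)
    moreover have "inner x ((mpow M K - P ** transpose P) *v x) \<le> eb * norm x ^ 2"
    proof -
      have "sn (mpow M K - P ** transpose P) \<le> eb" using appr sn_diff_comm by metis
      hence "sn (mpow M K - P ** transpose P) * norm x ^ 2 \<le> eb * norm x ^ 2"
        by (rule mult_right_mono) simp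
      thus ?thesis using inner_le_sn[of x "mpow M K - P ** transpose P"] by linarith
    qed
    moreover have "inner x ((P ** transpose P) *v x) = norm (transpose P *v x) ^ 2"
      by (rule inner_self_tr)
    moreover have "inner x ((mpow M K - P ** transpose P) *v x)
        = inner x (mpow M K *v x) - inner x ((P ** transpose P) *v x)"
      by (simp add: matrix_vector_mult_diff_rdistrib inner_diff_right del: transpose_matrix_vector)
    moreover have "(1/2) * norm x ^ 2 \<le> ((1 - \<epsilon>) ^ K - eb) * norm x ^ 2"
      using bern eK eb4 by (intro mult_right_mono) auto
    ultimately show ?thesis by (simp add: algebra_simps)
  qed
  define E where "E = mprod W L 1 - Phi"
  have "risk L W Phi = (1/2) * (\<Sum>i\<in>UNIV. norm (E $ i) ^ 2)"
    by (simp add: risk_def fro_sq E_def)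
  also have "\<dots> \<le> (\<Sum>i\<in>UNIV. norm (P *v (E $ i)) ^ 2)"
    unfolding sum_distrib_left
  proof (rule sum_mono)
    fix i
    show "1/2 * norm (E $ i) ^ 2 \<le> norm (P *v (E $ i)) ^ 2"
      using lower_from_tr[OF key, of "E $ i"] by linarith
  qed
  also have "\<dots> = (fro_norm (grad_L L W Phi))^2"
    by (simp add: grad_L_def fro_sq row_mul_tr E_def P_def K_def del: transpose_matrix_vector)
  finally show ?thesis .
qed

end
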